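(* Let $n \geq 0$ be an integer. Then the value $H_0(2a-n, a)$ is the same for all integers $a \geq 2n$.
   Context: For a finite poset, the Hasse diagram is the directed graph on its points whose arcs are the covering pairs $x \to y$ ($x<y$ with no $w$ satisfying $x<w<y$). Posets are counted up to isomorphism (unlabeled). $H_0(p,a)$ is the number of isomorphism classes of posets with $p$ points and exactly $a$ arcs in the Hasse diagram that have no isolated points (an isolated point is a point incident to no arc of the Hasse diagram). By convention the empty poset is counted, so $H_0(0,0) = 1$. *)

theory Defs
  imports Main
begin

definition poset_on :: "nat \<Rightarrow> (nat \<times> nat) set \<Rightarrow> bool" where
  "poset_on p R \<longleftrightarrow> partial_order_on {0..<p} R"

definition hasse :: "(nat \<times> nat) set \<Rightarrow> (nat \<times> nat) set" where
  "hasse R = {(x, y). (x, y) \<in> R \<and> x \<noteq> y \<and>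
      \<not> (\<exists>w. (x, w) \<in> R \<and> (w, y) \<in> R \<and> w \<noteq> x \<and> w \<noteq> y)}"

definition no_isolated :: "nat \<Rightarrow> (nat \<times> nat) set \<Rightarrow> bool" where
  "no_isolated p R \<longleftrightarrow>
     (\<forall>x\<in>{0..<p}. \<exists>y. (x, y) \<in> hasse R \<or> (y, x) \<in> hasse R)"

definition poset_iso :: "nat \<Rightarrow> (nat \<times> nat) set \<Rightarrow> (nat \<times> nat) set \<Rightarrow> bool" where
  "poset_iso p R S \<longleftrightarrow> (\<exists>f. bij_betw f {0..<p} {0..<p} \<and>
     (\<forall>x\<in>{0..<p}. \<forall>y\<in>{0..<p}. (x, y) \<in> R \<longleftrightarrow> (f x, f y) \<in> S))"

definition H0_posets :: "nat \<Rightarrow> nat \<Rightarrow> (nat \<times> nat) set set" where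
  "H0_posets p a = {R. poset_on p R \<and> card (hasse R) = a \<and> no_isolated p R}"

definition H0 :: "nat \<Rightarrow> nat \<Rightarrow> nat" where
  "H0 p a = card (H0_posets p a //
      {(R, S). R \<in> H0_posets p a \<and> S \<in> H0_posets p a \<and> poset_iso p R S})"

end

theory Submission
  imports Defs
begin

lemma poset_on_iff:
  "poset_on p R \<longleftrightarrow> R \<subseteq> {0..<p} \<times> {0..<p} \<and> (\<forall>x\<in>{0..<p}. (x,x)\<in>R) \<and>
     (\<forall>x y z. (x,y)\<in>R \<longrightarrow> (y,z)\<in>R \<longrightarrow> (x,z)\<in>R) \<and> (\<forall>x y. (x,y)\<in>R \<longrightarrow> (y,x)\<in>R \<longrightarrow> x=y)"
  unfolding poset_on_def partial_order_on_def preorder_on_def refl_on_def trans_def antisym_def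
  by blast

lemma card_quotient_eq:
  assumes eA: "equiv A E" and eB: "equiv B F" and hAB: "h ` A \<subseteq> B"
    and resp: "\<And>x y. x\<in>A \<Longrightarrow> y\<in>A \<Longrightarrow> (x,y)\<in>E \<longleftrightarrow> (h x, h y)\<in>F"
    and surj: "\<And>b. b\<in>B \<Longrightarrow> \<exists>a\<in>A. (h a, b)\<in>F"
  shows "card (A//E) = card (B//F)"
proof -
  define \<Phi> where "\<Phi> X = F `` (h ` X)" for X
  have EA: "E \<subseteq> A \<times> A" using eA unfolding equiv_def refl_on_def by blast
  have key: "\<Phi> (E``{a}) = F``{h a}" if "a\<in>A" for a
  proof
    show "\<Phi> (E``{a}) \<subseteq> F``{h a}"
    proof
      fix b assume "b \<in> \<Phi> (E``{a})"
      then obtain a' where a': "(a,a')\<in>E" "(h a', b)\<in>F" unfolding \<Phi>_def by auto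
      have "a'\<in>A" using a'(1) EA by blast
      then have "(h a, h a')\<in>F" using resp that a'(1) by blast
      then have "(h a, b)\<in>F" using a'(2) eB unfolding equiv_def trans_def by blast
      then show "b \<in> F``{h a}" by simp
    qed
    have "(a,a)\<in>E" using eA that unfolding equiv_def refl_on_def by blast
    then show "F``{h a} \<subseteq> \<Phi> (E``{a})"
      unfolding \<Phi>_def by blast
  qed
  have "inj_on \<Phi> (A//E)"
  proof (rule inj_onI)
    fix X Y assume X: "X\<in>A//E" and Y: "Y\<in>A//E" and eq: "\<Phi> X = \<Phi> Y"
    obtain a where a: "a\<in>A" "X = E``{a}" using X by (rule quotientE)
    obtain b where b: "b\<in>A" "Y = E``{b}" using Y by (rule quotientE)
    have "F``{h a} = F``{h b}" using eq key a b by simp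
    moreover have "h a \<in> B" "h b \<in> B" using hAB a b by blast+
    ultimately have "(h a, h b)\<in>F" using eB by (simp add: equiv_class_eq_iff)
    then have "(a,b)\<in>E" using resp a b by simp
    then show "X = Y" using a b eA by (simp add: equiv_class_eq_iff)
  qed
  moreover have "\<Phi> ` (A//E) = B//F"
  proof
    show "\<Phi> ` (A//E) \<subseteq> B//F"
    proof
      fix Y assume "Y \<in> \<Phi> ` (A//E)"
      then obtain X where X: "X \<in> A//E" "Y = \<Phi> X" by blast
      obtain a where "a\<in>A" "X = E``{a}" using X(1) by (rule quotientE)
      then have "Y = F``{h a}" "h a \<in> B" using key hAB X(2) by blast+
      then show "Y \<in> B//F" by (simp add: quotientI)
    qed
    show "B//F \<subseteq> \<Phi> ` (A//E)"
    proof
      fix Y assume "Y \<in> B//F"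
      then obtain b where b: "b\<in>B" "Y = F``{b}" by (rule quotientE)
      obtain a where a: "a\<in>A" "(h a, b)\<in>F" using surj b by blast
      have "F``{b} = F``{h a}" using equiv_class_eq[OF eB a(2)] by simp
      then have "Y = \<Phi> (E``{a})" using key a b by simp
      moreover have "E``{a} \<in> A//E" using a by (simp add: quotientI)
      ultimately show "Y \<in> \<Phi> ` (A//E)" by blast
    qed
  qed
  ultimately show ?thesis using card_image by metis
qed

definition addch :: "nat \<Rightarrow> (nat \<times> nat) set \<Rightarrow> (nat \<times> nat) set" where
  "addch p R = R \<union> {(p,p),(p,Suc p),(Suc p,Suc p)}"

lemma mem_addch: "(x,y) \<in> addch p R \<longleftrightarrow> (x,y)\<in>R \<or> (x=p \<and> (y=p \<or> y=Suc p)) \<or> (x = Suc p \<and> y = Suc p)"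
  unfolding addch_def by auto

lemma hasse_sub: "hasse R \<subseteq> R" unfolding hasse_def by auto

lemma hasse_addch:
  assumes "R \<subseteq> {0..<p} \<times> {0..<p}"
  shows "hasse (addch p R) = insert (p, Suc p) (hasse R)"
  using assms unfolding hasse_def addch_def by (auto 0 3)

lemma card_hasse_addch:
  assumes "R \<subseteq> {0..<p} \<times> {0..<p}"
  shows "card (hasse (addch p R)) = Suc (card (hasse R))"
proof -
  have "finite R" using assms by (rule finite_subset) auto
  then have "finite (hasse R)" using hasse_sub finite_subset by blast
  moreover have "(p, Suc p) \<notin> hasse R" using assms hasse_sub by fastforce
  ultimately show ?thesis using hasse_addch[OF assms] by simp
qed

lemma poset_addch:
  assumes sub: "R \<subseteq> {0..<p} \<times> {0..<p}"
  shows "poset_on (Suc (Suc p)) (addch p R) \<longleftrightarrow> poset_on p R"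
proof
  assume "poset_on (Suc (Suc p)) (addch p R)"
  then have a: "\<forall>x\<in>{0..<Suc (Suc p)}. (x,x)\<in>addch p R" 
    "(\<forall>x y z. (x,y)\<in>addch p R \<longrightarrow> (y,z)\<in>addch p R \<longrightarrow> (x,z)\<in>addch p R)"
    "(\<forall>x y. (x,y)\<in>addch p R \<longrightarrow> (y,x)\<in>addch p R \<longrightarrow> x=y)"
    unfolding poset_on_iff by blast+
  have r: "(x,y)\<in>R \<Longrightarrow> x < p \<and> y < p" for x y using sub by auto
  show "poset_on p R" unfolding poset_on_iff
  proof (intro conjI allI impI ballI)
    show "R \<subseteq> {0..<p} \<times> {0..<p}" by fact
    fix x assume x: "x \<in> {0..<p}" 
    then have "(x,x)\<in>addch p R" using a(1) by auto
    then show "(x,x)\<in>R" using x unfolding mem_addch by auto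
  next
    fix x y z assume xy: "(x,y)\<in>R" and yz: "(y,z)\<in>R" 
    have "(x,z)\<in>addch p R" using a(2) xy yz unfolding addch_def by blast
    moreover have "x < p" using r xy by blast
    ultimately show "(x,z)\<in>R" unfolding mem_addch by auto
  next
    fix x y assume "(x,y)\<in>R" "(y,x)\<in>R" then show "x=y" using a(3) unfolding addch_def by blast
  qed
next
  assume "poset_on p R"
  then have a: "\<forall>x\<in>{0..<p}. (x,x)\<in>R" 
    "(\<forall>x y z. (x,y)\<in>R \<longrightarrow> (y,z)\<in>R \<longrightarrow> (x,z)\<in>R)"
    "(\<forall>x y. (x,y)\<in>R \<longrightarrow> (y,x)\<in>R \<longrightarrow> x=y)"
    unfolding poset_on_iff by blast+
  have r: "(x,y)\<in>R \<Longrightarrow> x < p \<and> y < p" for x y using sub by auto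
  show "poset_on (Suc (Suc p)) (addch p R)" unfolding poset_on_iff
  proof (intro conjI allI impI ballI)
    show "addch p R \<subseteq> {0..<Suc (Suc p)} \<times> {0..<Suc (Suc p)}" using sub by (auto simp: addch_def)
    fix x assume "x \<in> {0..<Suc (Suc p)}" then show "(x,x)\<in>addch p R" using a(1) 
      by (auto simp: mem_addch less_Suc_eq)
  next
    fix x y z assume xy: "(x,y)\<in>addch p R" and yz: "(y,z)\<in>addch p R" 
    show "(x,z)\<in>addch p R"
    proof (cases "(x,y)\<in>R")
      case True
      then have "y < p" using r by blast
      then have "(y,z)\<in>R" using yz unfolding mem_addch by auto
      then show ?thesis using True a(2) unfolding addch_def by blast
    next
      case False
      then have "x = p \<and> (y = p \<or> y = Suc p) \<or> x = Suc p \<and> y = Suc p" using xy unfolding mem_addch by blast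
      moreover have "(y,z)\<notin>R" using r calculation by fastforce
      ultimately show ?thesis using yz unfolding mem_addch by auto
    qed
  next
    fix x y assume xy: "(x,y)\<in>addch p R" and yx: "(y,x)\<in>addch p R"
    show "x=y"
    proof (cases "(x,y)\<in>R")
      case True
      then have "x<p" "y < p" using r by blast+
      then have "(y,x)\<in>R" using yx unfolding mem_addch by auto
      then show ?thesis using True a(3) by blast
    next
      case False
      then have "x = p \<and> (y = p \<or> y = Suc p) \<or> x = Suc p \<and> y = Suc p" using xy unfolding mem_addch by blast
      moreover have "(y,x)\<notin>R" using r calculation by fastforce
      ultimately show ?thesis using yx unfolding mem_addch by auto
    qed
  qed
qed

lemma no_isolated_addch:
  assumes "R \<subseteq> {0..<p} \<times> {0..<p}"
  shows "no_isolated (Suc (Suc p)) (addch p R) \<longleftrightarrow> no_isolated p R"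
  using assms unfolding no_isolated_def hasse_addch[OF assms]
  by (auto simp: less_Suc_eq)

lemma H0_addch:
  assumes "R \<subseteq> {0..<p} \<times> {0..<p}"
  shows "addch p R \<in> H0_posets (Suc (Suc p)) (Suc a) \<longleftrightarrow> R \<in> H0_posets p a"
  unfolding H0_posets_def using poset_addch[OF assms] no_isolated_addch[OF assms]
    card_hasse_addch[OF assms] by auto

lemma iso_refl: "poset_iso p R R"
  unfolding poset_iso_def by (rule exI[of _ id]) auto

lemma iso_sym: assumes "poset_iso p R S" shows "poset_iso p S R"
proof -
  obtain f where f: "bij_betw f {0..<p} {0..<p}"
    and iff: "\<forall>x\<in>{0..<p}. \<forall>y\<in>{0..<p}. (x, y) \<in> R \<longleftrightarrow> (f x, f y) \<in> S"
    using assms unfolding poset_iso_def by blast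
  let ?g = "inv_into {0..<p} f"
  have g: "bij_betw ?g {0..<p} {0..<p}" using f by (rule bij_betw_inv_into)
  have "\<forall>x\<in>{0..<p}. \<forall>y\<in>{0..<p}. (x, y) \<in> S \<longleftrightarrow> (?g x, ?g y) \<in> R"
  proof (intro ballI)
    fix x y assume x: "x\<in>{0..<p}" and y: "y\<in>{0..<p}"
    have "?g x \<in> {0..<p}" "?g y \<in> {0..<p}" using g x y bij_betwE by blast+
    moreover have "f (?g x) = x" "f (?g y) = y" using f x y bij_betw_inv_into_right by fastforce+
    ultimately show "(x, y) \<in> S \<longleftrightarrow> (?g x, ?g y) \<in> R" using iff by metis
  qed
  then show ?thesis using g unfolding poset_iso_def by blast
qed

lemma iso_trans: assumes "poset_iso p R S" "poset_iso p S T" shows "poset_iso p R T"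
proof -
  obtain f where f: "bij_betw f {0..<p} {0..<p}"
    and iff: "\<forall>x\<in>{0..<p}. \<forall>y\<in>{0..<p}. (x, y) \<in> R \<longleftrightarrow> (f x, f y) \<in> S"
    using assms unfolding poset_iso_def by blast
  obtain g where g: "bij_betw g {0..<p} {0..<p}"
    and iff2: "\<forall>x\<in>{0..<p}. \<forall>y\<in>{0..<p}. (x, y) \<in> S \<longleftrightarrow> (g x, g y) \<in> T"
    using assms unfolding poset_iso_def by blast
  have "bij_betw (g \<circ> f) {0..<p} {0..<p}" using f g by (rule bij_betw_trans)
  moreover have "\<forall>x\<in>{0..<p}. \<forall>y\<in>{0..<p}. (x, y) \<in> R \<longleftrightarrow> ((g\<circ>f) x, (g\<circ>f) y) \<in> T"
  proof (intro ballI)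
    fix x y assume x: "x\<in>{0..<p}" and y: "y\<in>{0..<p}"
    have "f x \<in> {0..<p}" "f y \<in> {0..<p}" using f x y bij_betwE by blast+
    then show "(x, y) \<in> R \<longleftrightarrow> ((g\<circ>f) x, (g\<circ>f) y) \<in> T" using iff iff2 x y by simp
  qed
  ultimately show ?thesis unfolding poset_iso_def by blast
qed

lemma equiv_H0: "equiv (H0_posets p a)
   {(R, S). R \<in> H0_posets p a \<and> S \<in> H0_posets p a \<and> poset_iso p R S}"
  unfolding equiv_def refl_on_def sym_def trans_def
proof (intro conjI allI impI ballI)
  show "{(R, S). R \<in> H0_posets p a \<and> S \<in> H0_posets p a \<and> poset_iso p R S} \<subseteq> H0_posets p a \<times> H0_posets p a"
    by auto
  fix x assume "x \<in> H0_posets p a" then show "(x,x) \<in> {(R, S). R \<in> H0_posets p a \<and> S \<in> H0_posets p a \<and> poset_iso p R S}"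
    using iso_refl by simp
next
  fix x y assume "(x,y) \<in> {(R, S). R \<in> H0_posets p a \<and> S \<in> H0_posets p a \<and> poset_iso p R S}"
  then show "(y,x) \<in> {(R, S). R \<in> H0_posets p a \<and> S \<in> H0_posets p a \<and> poset_iso p R S}"
    using iso_sym by simp
next
  fix x y z assume "(x,y) \<in> {(R, S). R \<in> H0_posets p a \<and> S \<in> H0_posets p a \<and> poset_iso p R S}"
    "(y,z) \<in> {(R, S). R \<in> H0_posets p a \<and> S \<in> H0_posets p a \<and> poset_iso p R S}"
  then show "(x,z) \<in> {(R, S). R \<in> H0_posets p a \<and> S \<in> H0_posets p a \<and> poset_iso p R S}"
    using iso_trans by auto
qed

lemma iso_addch:
  assumes "poset_iso p R S" and sR: "R \<subseteq> {0..<p} \<times> {0..<p}" and sS: "S \<subseteq> {0..<p} \<times> {0..<p}"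
  shows "poset_iso (Suc (Suc p)) (addch p R) (addch p S)"
proof -
  obtain f where f: "bij_betw f {0..<p} {0..<p}"
    and iff: "\<forall>x\<in>{0..<p}. \<forall>y\<in>{0..<p}. (x, y) \<in> R \<longleftrightarrow> (f x, f y) \<in> S"
    using assms unfolding poset_iso_def by blast
  define g where "g x = (if x < p then f x else x)" for x
  have fl: "f x < p" if "x < p" for x using f that bij_betwE by fastforce
  have "bij_betw g {0..<p} {0..<p} = bij_betw f {0..<p} {0..<p}"
    by (rule bij_betw_cong) (simp add: g_def)
  then have "bij_betw g {0..<p} {0..<p}" using f by simp
  moreover have "bij_betw g {p, Suc p} {p, Suc p}" unfolding g_def by (simp add: bij_betw_def)
  ultimately have "bij_betw g ({0..<p} \<union> {p, Suc p}) ({0..<p} \<union> {p, Suc p})"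
    by (intro bij_betw_combine) auto
  moreover have "{0..<p} \<union> {p, Suc p} = {0..<Suc (Suc p)}" by auto
  ultimately have gb: "bij_betw g {0..<Suc (Suc p)} {0..<Suc (Suc p)}" by simp
  have "\<forall>x\<in>{0..<Suc (Suc p)}. \<forall>y\<in>{0..<Suc (Suc p)}. (x, y) \<in> addch p R \<longleftrightarrow> (g x, g y) \<in> addch p S"
  proof (intro ballI)
    fix x y assume x: "x \<in> {0..<Suc (Suc p)}" and y: "y \<in> {0..<Suc (Suc p)}"
    show "(x, y) \<in> addch p R \<longleftrightarrow> (g x, g y) \<in> addch p S"
    proof (cases "x < p \<and> y < p")
      case True
      then have "g x < p" "g y < p" "g x = f x" "g y = f y" using fl g_def by auto
      have "(x, y) \<in> addch p R \<longleftrightarrow> (x, y) \<in> R" using True unfolding mem_addch by auto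
      also have "\<dots> \<longleftrightarrow> (f x, f y) \<in> S" using iff True by simp
      also have "\<dots> \<longleftrightarrow> (g x, g y) \<in> addch p S" using \<open>g x < p\<close> \<open>g y < p\<close> \<open>g x = f x\<close> \<open>g y = f y\<close>
        unfolding mem_addch by auto
      finally show ?thesis .
    next
      case False
      have gx: "(x < p \<and> g x < p) \<or> (x \<ge> p \<and> g x = x)" 
        using fl g_def by auto
      have gy: "(y < p \<and> g y < p) \<or> (y \<ge> p \<and> g y = y)" 
        using fl g_def by auto
      have rR: "a < p \<and> b < p" if "(a,b)\<in>R" for a b using sR that by auto
      have rS: "a < p \<and> b < p" if "(a,b)\<in>S" for a b using sS that by auto
      have n1: "(x,y) \<notin> R" using False rR by blast
      have n2: "(g x, g y) \<notin> S"
      proof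
        assume "(g x, g y) \<in> S"
        then have "g x < p" "g y < p" using rS by blast+
        then show False using False gx gy by auto
      qed
      show ?thesis
      proof (cases "x < p")
        case True
        then have "y \<ge> p" "g y = y" "g x < p" using False gx gy by auto
        then show ?thesis using n1 n2 True unfolding mem_addch by auto
      next
        case False
        then have "g x = x" using gx by auto
        show ?thesis
        proof (cases "y < p")
          case True
          then have "g y < p" using gy by auto
          then show ?thesis using n1 n2 True \<open>g x = x\<close> unfolding mem_addch by auto
        next
          case False
          then have "g y = y" using gy by auto
          then show ?thesis using n1 n2 \<open>g x = x\<close> unfolding mem_addch by simp
        qed
      qed
    qed
  qed
  then show ?thesis using gb unfolding poset_iso_def by blast
qed

lemma addch_facts:
  assumes "R \<subseteq> {0..<p} \<times> {0..<p}"
  shows "(p,w)\<in>addch p R \<Longrightarrow> w = p \<or> w = Suc p"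
    and "(w,p)\<in>addch p R \<Longrightarrow> w = p"
    and "(Suc p,w)\<in>addch p R \<Longrightarrow> w = Suc p"
    and "(w,Suc p)\<in>addch p R \<Longrightarrow> w = p \<or> w = Suc p"
    and "z < p \<Longrightarrow> w < p \<Longrightarrow> (z,w)\<in>addch p R \<longleftrightarrow> (z,w)\<in>R"
    and "(p, Suc p) \<in> addch p R"
  using assms unfolding mem_addch by auto

lemma inj_endo_bij:
  assumes "inj_on g A" "g ` A \<subseteq> A" "finite A"
  shows "bij_betw g A A"
  using assms endo_inj_surj unfolding bij_betw_def by blast

lemma iso_cancel:
  assumes sR: "R \<subseteq> {0..<p} \<times> {0..<p}" and sS: "S \<subseteq> {0..<p} \<times> {0..<p}"
    and pR: "poset_on p R" and pS: "poset_on p S"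
    and iso: "poset_iso (Suc (Suc p)) (addch p R) (addch p S)"
  shows "poset_iso p R S"
proof -
  let ?W = "{0..<Suc (Suc p)}"
  obtain f where f: "bij_betw f ?W ?W"
    and iff: "\<forall>x\<in>?W. \<forall>y\<in>?W. (x, y) \<in> addch p R \<longleftrightarrow> (f x, f y) \<in> addch p S"
    using iso unfolding poset_iso_def by blast
  have fW: "f z \<in> ?W" if "z \<in> ?W" for z using f that bij_betwE by blast
  have finj: "f z = f w \<longleftrightarrow> z = w" if "z\<in>?W" "w\<in>?W" for z w
    using f that unfolding bij_betw_def inj_on_def by blast
  have pW: "p \<in> ?W" "Suc p \<in> ?W" by auto
  obtain x where x: "x \<in> ?W" "f x = p" using f pW unfolding bij_betw_def by (metis imageE)
  obtain y where y: "y \<in> ?W" "f y = Suc p" using f pW unfolding bij_betw_def by (metis imageE)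
  note RF = addch_facts[OF sR]
  note SF = addch_facts[OF sS]
  have xy: "(x,y) \<in> addch p R" using iff x y SF(6) by simp
  have antiR: "a = b" if "(a,b)\<in>R" "(b,a)\<in>R" for a b using pR that unfolding poset_on_iff by blast
  have antiS: "a = b" if "(a,b)\<in>S" "(b,a)\<in>S" for a b using pS that unfolding poset_on_iff by blast
  have reflR: "(a,a)\<in>R" if "a < p" for a using pR that unfolding poset_on_iff by auto
  have reflS: "(a,a)\<in>S" if "a < p" for a using pS that unfolding poset_on_iff by auto
  have rR: "a < p \<and> b < p" if "(a,b)\<in>R" for a b using sR that by auto
  have rS: "a < p \<and> b < p" if "(a,b)\<in>S" for a b using sS that by auto
  show ?thesis
  proof (cases "x = p")
    case True
    have "y = p \<or> y = Suc p" using RF(1) xy True by blast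
    moreover have "y \<noteq> x" using x y by auto
    ultimately have yS: "y = Suc p" using True by simp
    have fV: "f z < p" if "z < p" for z
    proof -
      have "z \<in> ?W" using that by simp
      then have "f z \<in> ?W" "f z \<noteq> p" "f z \<noteq> Suc p" using finj[of z x] finj[of z y] fW x y True yS that by auto
      then show ?thesis by auto
    qed
    have "inj_on f {0..<p}" using finj unfolding inj_on_def by simp
    moreover have "f ` {0..<p} \<subseteq> {0..<p}" using fV by auto
    ultimately have "bij_betw f {0..<p} {0..<p}" by (intro inj_endo_bij) auto
    moreover have "\<forall>a\<in>{0..<p}. \<forall>b\<in>{0..<p}. (a, b) \<in> R \<longleftrightarrow> (f a, f b) \<in> S"
    proof (intro ballI)
      fix a b assume a: "a\<in>{0..<p}" and b: "b\<in>{0..<p}"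
      then have "(a, b) \<in> R \<longleftrightarrow> (a,b)\<in>addch p R" using RF(5) by simp
      also have "\<dots> \<longleftrightarrow> (f a, f b) \<in> addch p S" using iff a b by simp
      also have "\<dots> \<longleftrightarrow> (f a, f b) \<in> S" using SF(5) fV a b by simp
      finally show "(a, b) \<in> R \<longleftrightarrow> (f a, f b) \<in> S" .
    qed
    ultimately show ?thesis unfolding poset_iso_def by blast
  next
    case False
    have "x \<noteq> Suc p"
    proof
      assume "x = Suc p"
      then have "(p, x) \<in> addch p R" using RF(6) by simp
      then have "(f p, p) \<in> addch p S" using iff x pW by auto
      then have "f p = p" using SF(2) by blast
      then show False using finj[of p x] x pW False by auto
    qed
    then have xp: "x < p" using x(1) False by auto
    then have "(x,y)\<in>R" using xy unfolding mem_addch by auto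
    then have yp: "y < p" using rR by blast
    define u where "u = f p"
    define v where "v = f (Suc p)"
    have "u \<noteq> p" using finj[of p x] x False pW unfolding u_def by auto
    moreover have "u \<noteq> Suc p" using finj[of p y] y yp pW unfolding u_def by auto
    moreover have "u \<in> ?W" using fW pW unfolding u_def by auto
    ultimately have up: "u < p" by auto
    have "(u,v)\<in>addch p S" using iff pW RF(6) unfolding u_def v_def by auto
    then have uv: "(u,v)\<in>S" using up unfolding mem_addch by auto
    then have vp: "v < p" using rS by blast
    have xny: "x \<noteq> y" using x y by auto
    have unv: "u \<noteq> v" using finj[of p "Suc p"] pW unfolding u_def v_def by auto
    have fz: "f z < p \<and> f z \<noteq> u \<and> f z \<noteq> v" if "z < p" "z \<noteq> x" "z \<noteq> y" for z
    proof -
      have zW: "z \<in> ?W" using that by simp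
      have "f z \<noteq> p" "f z \<noteq> Suc p" using finj[of z x] finj[of z y] zW x y that by auto
      moreover have "f z \<noteq> u" "f z \<noteq> v" using finj[of z p] finj[of z "Suc p"] zW pW that
        unfolding u_def v_def by auto
      moreover have "f z \<in> ?W" using fW zW by blast
      ultimately show ?thesis by auto
    qed
    have Rz: "(x,z)\<notin>R \<and> (z,x)\<notin>R \<and> (y,z)\<notin>R \<and> (z,y)\<notin>R" if "z < p" "z \<noteq> x" "z \<noteq> y" for z
    proof -
      have zW: "z \<in> ?W" using that by simp
      have xW: "x \<in> ?W" "y \<in> ?W" using x y by auto
      have fzz: "f z \<noteq> p" "f z \<noteq> Suc p" using finj[of z x] finj[of z y] zW x y that by auto
      have "(x,z)\<notin>addch p R" using iff zW xW x SF(1) fzz by auto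
      moreover have "(z,x)\<notin>addch p R" using iff zW xW x SF(2) fzz by auto
      moreover have "(y,z)\<notin>addch p R" using iff zW xW y SF(3) fzz by auto
      moreover have "(z,y)\<notin>addch p R" using iff zW xW y SF(4) fzz by auto
      ultimately show ?thesis unfolding mem_addch by auto
    qed
    have Sz: "(u,w)\<notin>S \<and> (w,u)\<notin>S \<and> (v,w)\<notin>S \<and> (w,v)\<notin>S" if "w < p" "w \<noteq> u" "w \<noteq> v" for w
    proof -
      have wW: "w \<in> ?W" using that by simp
      obtain z where z: "z \<in> ?W" "f z = w" using f wW unfolding bij_betw_def by (metis imageE)
      have zp: "z \<noteq> p" "z \<noteq> Suc p" using that z unfolding u_def v_def by auto
      have "(p,z)\<notin>addch p R" "(z,p)\<notin>addch p R" "(Suc p,z)\<notin>addch p R" "(z,Suc p)\<notin>addch p R"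
        using RF(1-4) zp by blast+
      then have "(u,w)\<notin>addch p S" "(w,u)\<notin>addch p S" "(v,w)\<notin>addch p S" "(w,v)\<notin>addch p S"
        using iff z pW unfolding u_def v_def by auto
      then show ?thesis unfolding mem_addch by auto
    qed
    have yx: "(y,x)\<notin>R" using antiR \<open>(x,y)\<in>R\<close> xny by blast
    have vu: "(v,u)\<notin>S" using antiS uv unv by blast
    define g where "g z = (if z = x then u else if z = y then v else f z)" for z
    have gV: "g z < p" if "z < p" for z using fz[OF that] up vp unfolding g_def by auto
    have ginj: "inj_on g {0..<p}"
    proof (rule inj_onI)
      fix a b assume a: "a \<in> {0..<p}" and b: "b \<in> {0..<p}" and e: "g a = g b"
      show "a = b"
      proof (cases "a = x \<or> a = y \<or> b = x \<or> b = y")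
        case True
        then show ?thesis using e fz a b unv unfolding g_def by (auto split: if_splits)
      next
        case False
        then have "f a = f b" using e unfolding g_def by auto
        then show ?thesis using finj a b by auto
      qed
    qed
    have "bij_betw g {0..<p} {0..<p}" using ginj gV by (intro inj_endo_bij) auto
    moreover have "\<forall>a\<in>{0..<p}. \<forall>b\<in>{0..<p}. (a, b) \<in> R \<longleftrightarrow> (g a, g b) \<in> S"
    proof (intro ballI)
      fix a b assume a: "a\<in>{0..<p}" and b: "b\<in>{0..<p}"
      show "(a, b) \<in> R \<longleftrightarrow> (g a, g b) \<in> S"
      proof (cases "a = x \<or> a = y \<or> b = x \<or> b = y")
        case True
        have gx: "g x = u" and gy: "g y = v" using xny unfolding g_def by auto
        have go: "g z = f z" if "z \<noteq> x" "z \<noteq> y" for z using that unfolding g_def by auto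
        have ap: "a < p" and bp: "b < p" using a b by auto
        show ?thesis
        proof (cases "a = x")
          case ax: True
          show ?thesis
          proof (cases "b = x")
            case True then show ?thesis using ax gx reflR reflS xp up by simp
          next
            case bx: False
            show ?thesis
            proof (cases "b = y")
              case True then show ?thesis using ax gx gy uv \<open>(x,y)\<in>R\<close> by simp
            next
              case False
              then have "(x,b)\<notin>R" "(u, f b)\<notin>S" using Rz[OF bp bx False] Sz[of "f b"] fz[OF bp bx False] by auto
              then show ?thesis using ax gx go[OF bx False] by simp
            qed
          qed
        next
          case ax: False
          show ?thesis
          proof (cases "a = y")
            case ay: True
            show ?thesis
            proof (cases "b = x")
              case True then show ?thesis using ay gx gy yx vu by simp
            next
              case bx: False
              show ?thesis
              proof (cases "b = y")
                case True then show ?thesis using ay gy reflR reflS yp vp by simp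
              next
                case False
                then have "(y,b)\<notin>R" "(v, f b)\<notin>S" using Rz[OF bp bx False] Sz[of "f b"] fz[OF bp bx False] by auto
                then show ?thesis using ay gy go[OF bx False] by simp
              qed
            qed
          next
            case ay: False
            have ga: "g a = f a" using go[OF ax ay] .
            have fa: "f a < p" "f a \<noteq> u" "f a \<noteq> v" using fz[OF ap ax ay] by auto
            show ?thesis
            proof (cases "b = x")
              case True
              then show ?thesis using Rz[OF ap ax ay] Sz[OF fa] ga gx by simp
            next
              case False
              then have "b = y" using True ax ay by blast
              then show ?thesis using Rz[OF ap ax ay] Sz[OF fa] ga gy by simp
            qed
          qed
        qed
      next
        case False
        then have g: "g a = f a" "g b = f b" unfolding g_def by auto
        have "(a, b) \<in> R \<longleftrightarrow> (a,b)\<in>addch p R" using RF(5) a b by simp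
        also have "\<dots> \<longleftrightarrow> (f a, f b) \<in> addch p S" using iff a b by simp
        also have "\<dots> \<longleftrightarrow> (f a, f b) \<in> S" using SF(5) fz a b False by simp
        finally show ?thesis using g by simp
      qed
    qed
    ultimately show ?thesis unfolding poset_iso_def by blast
  qed
qed

lemma cover_up:
  assumes P: "poset_on q T" and xz: "(x,z)\<in>T" and ne: "x \<noteq> z"
  shows "\<exists>w. (x,w)\<in>hasse T \<and> (w,z)\<in>T"
proof -
  have sub: "T \<subseteq> {0..<q} \<times> {0..<q}" and refl: "\<forall>a\<in>{0..<q}. (a,a)\<in>T"
    and tr: "\<And>a b c. (a,b)\<in>T \<Longrightarrow> (b,c)\<in>T \<Longrightarrow> (a,c)\<in>T"
    and an: "\<And>a b. (a,b)\<in>T \<Longrightarrow> (b,a)\<in>T \<Longrightarrow> a = b"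
    using P unfolding poset_on_iff by blast+
  have fin: "finite T" using sub by (rule finite_subset) auto
  define m where "m w = card {u. (u,w)\<in>T}" for w
  have finD: "finite {u. (u,w)\<in>T}" for w
    using finite_subset[of "{u. (u,w)\<in>T}" "fst ` T"] fin by force
  let ?P = "\<lambda>w. (x,w)\<in>T \<and> w \<noteq> x \<and> (w,z)\<in>T"
  have "?P z" using xz ne refl sub by auto
  then obtain w where w: "?P w" and min: "\<And>v. ?P v \<Longrightarrow> m w \<le> m v"
    using ex_has_least_nat[of ?P z m] by blast
  have nb: "\<not> (\<exists>u. (x,u)\<in>T \<and> (u,w)\<in>T \<and> u \<noteq> x \<and> u \<noteq> w)"
  proof
    assume "\<exists>u. (x,u)\<in>T \<and> (u,w)\<in>T \<and> u \<noteq> x \<and> u \<noteq> w"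
    then obtain u where xu: "(x,u)\<in>T" and uw: "(u,w)\<in>T" and ux: "u \<noteq> x" and uw': "u \<noteq> w" by blast
      have "?P u" using xu ux tr[OF uw] w by blast
      moreover have "m u < m w"
      proof -
        have "{v. (v,u)\<in>T} \<subseteq> {v. (v,w)\<in>T}" using tr uw by blast
        moreover have "w \<in> {v. (v,w)\<in>T}" using w sub refl by auto
        moreover have "w \<notin> {v. (v,u)\<in>T}" using an uw uw' by blast
        ultimately have "{v. (v,u)\<in>T} < {v. (v,w)\<in>T}" by blast
        then show ?thesis unfolding m_def using finD psubset_card_mono by blast
      qed
      ultimately show False using min by fastforce
  qed
  have "(x,w)\<in>hasse T" unfolding hasse_def using w nb by auto
  then show ?thesis using w by blast
qed

lemma cover_down:
  assumes P: "poset_on q T" and xz: "(z,x)\<in>T" and ne: "x \<noteq> z"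
  shows "\<exists>w. (w,x)\<in>hasse T \<and> (z,w)\<in>T"
proof -
  have sub: "T \<subseteq> {0..<q} \<times> {0..<q}" and refl: "\<forall>a\<in>{0..<q}. (a,a)\<in>T"
    and tr: "\<And>a b c. (a,b)\<in>T \<Longrightarrow> (b,c)\<in>T \<Longrightarrow> (a,c)\<in>T"
    and an: "\<And>a b. (a,b)\<in>T \<Longrightarrow> (b,a)\<in>T \<Longrightarrow> a = b"
    using P unfolding poset_on_iff by blast+
  have fin: "finite T" using sub by (rule finite_subset) auto
  define m where "m w = card {u. (w,u)\<in>T}" for w
  have finD: "finite {u. (w,u)\<in>T}" for w
    using finite_subset[of "{u. (w,u)\<in>T}" "snd ` T"] fin by force
  let ?P = "\<lambda>w. (w,x)\<in>T \<and> w \<noteq> x \<and> (z,w)\<in>T"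
  have "?P z" using xz ne refl sub by auto
  then obtain w where w: "?P w" and min: "\<And>v. ?P v \<Longrightarrow> m w \<le> m v"
    using ex_has_least_nat[of ?P z m] by blast
  have nb: "\<not> (\<exists>u. (w,u)\<in>T \<and> (u,x)\<in>T \<and> u \<noteq> w \<and> u \<noteq> x)"
  proof
    assume "\<exists>u. (w,u)\<in>T \<and> (u,x)\<in>T \<and> u \<noteq> w \<and> u \<noteq> x"
    then obtain u where uw: "(w,u)\<in>T" and xu: "(u,x)\<in>T" and ux: "u \<noteq> w" and uw': "u \<noteq> x" by blast
      have "?P u" using xu uw' tr[OF _ uw] w by blast
      moreover have "m u < m w"
      proof -
        have "{v. (u,v)\<in>T} \<subseteq> {v. (w,v)\<in>T}" using tr uw by blast
        moreover have "w \<in> {v. (w,v)\<in>T}" using w sub refl by auto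
        moreover have "w \<notin> {v. (u,v)\<in>T}" using an uw ux by blast
        ultimately have "{v. (u,v)\<in>T} < {v. (w,v)\<in>T}" by blast
        then show ?thesis unfolding m_def using finD psubset_card_mono by blast
      qed
      ultimately show False using min by fastforce
  qed
  have "(w,x)\<in>hasse T" unfolding hasse_def using w nb by auto
  then show ?thesis using w by blast
qed

lemma iso_edge_order:
  assumes P: "poset_on q T" and xy: "(x,y)\<in>hasse T"
    and only: "\<forall>e\<in>hasse T. (fst e = x \<or> fst e = y \<or> snd e = x \<or> snd e = y) \<longrightarrow> e = (x,y)"
    and z: "(x,z)\<in>T \<or> (z,x)\<in>T \<or> (y,z)\<in>T \<or> (z,y)\<in>T"
  shows "z = x \<or> z = y"
proof (rule ccontr)
  assume "\<not> (z = x \<or> z = y)"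
  then have zx: "z \<noteq> x" and zy: "z \<noteq> y" by auto
  have xny: "x \<noteq> y" using xy unfolding hasse_def by auto
  have A: "(x,z)\<notin>T"
  proof
    assume "(x,z)\<in>T"
    then obtain w where "(x,w)\<in>hasse T" "(w,z)\<in>T" using cover_up[OF P] zx by metis
    then have "w = y" "(y,z)\<in>T" using only by auto
    then obtain w' where "(y,w')\<in>hasse T" using cover_up[OF P] zy by metis
    then show False using only xny by fastforce
  qed
  have B: "(z,x)\<notin>T"
  proof
    assume "(z,x)\<in>T"
    then obtain w where "(w,x)\<in>hasse T" using cover_down[OF P] zx by metis
    then show False using only xny by fastforce
  qed
  have C: "(y,z)\<notin>T"
  proof
    assume "(y,z)\<in>T"
    then obtain w where "(y,w)\<in>hasse T" using cover_up[OF P] zy by metis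
    then show False using only xny by fastforce
  qed
  have D: "(z,y)\<notin>T"
  proof
    assume "(z,y)\<in>T"
    then obtain w where "(w,y)\<in>hasse T" "(z,w)\<in>T" using cover_down[OF P] zy by metis
    then have "w = x" using only by auto
    then show False using B \<open>(z,w)\<in>T\<close> by simp
  qed
  show False using A B C D z by blast
qed

lemma iso_edge_exists:
  fixes H :: "('a \<times> 'a) set" and V :: "'a set"
  assumes finV: "finite V" and HV: "H \<subseteq> V \<times> V" and irr: "\<forall>e\<in>H. fst e \<noteq> snd e"
    and cov: "\<forall>v\<in>V. \<exists>e\<in>H. fst e = v \<or> snd e = v"
    and lt: "3 * card H < 2 * card V"
  shows "\<exists>x y. (x,y)\<in>H \<and> (\<forall>e\<in>H. (fst e = x \<or> fst e = y \<or> snd e = x \<or> snd e = y) \<longrightarrow> e = (x,y))"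
proof (rule ccontr)
  assume no: "\<not> ?thesis"
  have finH: "finite H" using finV HV finite_subset by blast
  define inc where "inc v = {e\<in>H. fst e = v \<or> snd e = v}" for v
  have fininc: "finite (inc v)" for v using finH unfolding inc_def by simp
  have sumdeg: "(\<Sum>v\<in>V. card (inc v)) = 2 * card H"
  proof -
    have "(\<Sum>v\<in>V. card (inc v)) = (\<Sum>v\<in>V. \<Sum>e\<in>H. if fst e = v \<or> snd e = v then 1 else 0)"
      unfolding inc_def by (simp add: sum.inter_filter[OF finH, symmetric])
    also have "\<dots> = (\<Sum>e\<in>H. \<Sum>v\<in>V. if fst e = v \<or> snd e = v then 1 else 0)"
      by (rule sum.swap)
    also have "\<dots> = (\<Sum>e\<in>H. (2::nat))"
    proof (rule sum.cong)
      fix e assume e: "e \<in> H"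
      have "(\<Sum>v\<in>V. if fst e = v \<or> snd e = v then 1 else 0) = card {v\<in>V. fst e = v \<or> snd e = v}"
        by (simp add: sum.inter_filter[OF finV, symmetric])
      also have "{v\<in>V. fst e = v \<or> snd e = v} = {fst e, snd e}" using e HV by auto
      also have "card {fst e, snd e} = 2" using irr e by simp
      finally show "(\<Sum>v\<in>V. if fst e = v \<or> snd e = v then 1 else 0) = (2::nat)" .
    qed simp
    also have "\<dots> = 2 * card H" by simp
    finally show ?thesis .
  qed
  define L where "L = {v\<in>V. card (inc v) \<le> 1}"
  have pos: "card (inc v) \<ge> 1" if "v \<in> V" for v
  proof -
    have "\<exists>e\<in>H. fst e = v \<or> snd e = v" using cov that by (rule bspec)
    then obtain e where "e \<in> H" "fst e = v \<or> snd e = v" by (rule bexE)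
    then have "e \<in> inc v" unfolding inc_def by simp
    then have "card (inc v) \<noteq> 0" using fininc[of v] by auto
    then show ?thesis by linarith
  qed
  have one: "\<exists>e. inc v = {e}" if "v \<in> L" for v
  proof -
    have "v \<in> V" "card (inc v) \<le> 1" using that unfolding L_def by auto
    then have "card (inc v) = 1" using pos[of v] by linarith
    then show ?thesis by (simp add: card_1_singleton_iff)
  qed
  define \<phi> where "\<phi> v = the_elem (inc v)" for v
  have phi: "inc v = {\<phi> v}" if "v \<in> L" for v using one[OF that] unfolding \<phi>_def by auto
  have "inj_on \<phi> L"
  proof (rule inj_onI, rule ccontr)
    fix v w assume v: "v \<in> L" and w: "w \<in> L" and eq: "\<phi> v = \<phi> w" and ne: "v \<noteq> w"
    let ?e = "\<phi> v"
    have ev: "?e \<in> inc v" and ew: "?e \<in> inc w" using phi v w eq by auto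
    have eH: "?e \<in> H" using ev unfolding inc_def by auto
    have ends: "{fst ?e, snd ?e} = {v, w}" using ev ew ne irr eH unfolding inc_def by auto
    have "\<forall>e'\<in>H. (fst e' = fst ?e \<or> fst e' = snd ?e \<or> snd e' = fst ?e \<or> snd e' = snd ?e) \<longrightarrow> e' = (fst ?e, snd ?e)"
    proof (intro ballI impI)
      fix e' assume e'H: "e' \<in> H" and t: "fst e' = fst ?e \<or> fst e' = snd ?e \<or> snd e' = fst ?e \<or> snd e' = snd ?e"
      then have "e' \<in> inc v \<or> e' \<in> inc w" using ends unfolding inc_def by (auto simp: doubleton_eq_iff)
      then have "e' = ?e" using phi v w eq by auto
      then show "e' = (fst ?e, snd ?e)" by simp
    qed
    then show False using no eH by (metis prod.collapse)
  qed
  moreover have "\<phi> ` L \<subseteq> H" using phi unfolding inc_def by auto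
  ultimately have cardL: "card L \<le> card H" using finH card_inj_on_le by blast
  have "(\<Sum>v\<in>V. (if v \<in> L then 1 else 2)) \<le> (\<Sum>v\<in>V. card (inc v))"
  proof (rule sum_mono)
    fix v assume "v \<in> V" then show "(if v \<in> L then 1 else 2) \<le> card (inc v)"
      using pos unfolding L_def by auto
  qed
  moreover have "(\<Sum>v\<in>V. (if v \<in> L then 1 else 2)) = card (V \<inter> L) + 2 * card (V - L)"
    using finV by (simp add: sum.If_cases Diff_eq)
  moreover have "card (V \<inter> L) + card (V - L) = card V" using finV
    by (metis Int_Diff_disjoint Int_Diff_Un card_Un_disjoint finite_Diff finite_Int)
  moreover have "V \<inter> L = L" unfolding L_def by auto
  ultimately have "card L + 2 * card (V - L) \<le> 2 * card H" "card L + card (V - L) = card V"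
    using sumdeg by simp_all
  then show False using cardL lt by linarith
qed

lemma poset_sub: "poset_on q T \<Longrightarrow> T \<subseteq> {0..<q} \<times> {0..<q}"
  unfolding poset_on_iff by blast

lemma H0_iso_invariant:
  assumes UV: "U \<subseteq> {0..<q} \<times> {0..<q}" and T: "T \<in> H0_posets q m" and iso: "poset_iso q U T"
  shows "U \<in> H0_posets q m"
proof -
  let ?V = "{0..<q}"
  obtain f where f: "bij_betw f ?V ?V"
    and iff: "\<forall>x\<in>?V. \<forall>y\<in>?V. (x, y) \<in> U \<longleftrightarrow> (f x, f y) \<in> T"
    using iso unfolding poset_iso_def by blast
  have PT: "poset_on q T" and cT: "card (hasse T) = m" and nT: "no_isolated q T"
    using T unfolding H0_posets_def by auto
  have TV: "T \<subseteq> ?V \<times> ?V" using poset_sub[OF PT] .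
  have reflT: "(a,a)\<in>T" if "a \<in> ?V" for a using PT that unfolding poset_on_iff by blast
  have trT: "(a,c)\<in>T" if "(a,b)\<in>T" "(b,c)\<in>T" for a b c using PT that unfolding poset_on_iff by blast
  have anT: "a = b" if "(a,b)\<in>T" "(b,a)\<in>T" for a b using PT that unfolding poset_on_iff by blast
  have fV: "f z \<in> ?V" if "z \<in> ?V" for z using f that bij_betwE by blast
  have finj: "f z = f w \<longleftrightarrow> z = w" if "z\<in>?V" "w\<in>?V" for z w
    using f that unfolding bij_betw_def inj_on_def by blast
  have fsurj: "\<exists>z\<in>?V. f z = w" if "w \<in> ?V" for w
    using f that unfolding bij_betw_def by (metis imageE)
  have UV': "a \<in> ?V \<and> b \<in> ?V" if "(a,b)\<in>U" for a b using UV that by auto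
  have TV': "a \<in> ?V \<and> b \<in> ?V" if "(a,b)\<in>T" for a b using TV that by auto
  have PU: "poset_on q U" unfolding poset_on_iff
  proof (intro conjI allI impI ballI)
    show "U \<subseteq> ?V \<times> ?V" by fact
    fix x assume "x \<in> ?V" then show "(x,x)\<in>U" using iff reflT fV by blast
  next
    fix x y z assume xy: "(x,y)\<in>U" and yz: "(y,z)\<in>U"
    then have V: "x\<in>?V" "y\<in>?V" "z\<in>?V" using UV' by blast+
    then have "(f x, f y)\<in>T" "(f y, f z)\<in>T" using iff xy yz by blast+
    then have "(f x, f z)\<in>T" using trT by blast
    then show "(x,z)\<in>U" using iff V by blast
  next
    fix x y assume xy: "(x,y)\<in>U" and yx: "(y,x)\<in>U"
    then have V: "x\<in>?V" "y\<in>?V" using UV' by blast+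
    then have "(f x, f y)\<in>T" "(f y, f x)\<in>T" using iff xy yx by blast+
    then have "f x = f y" using anT by blast
    then show "x = y" using finj V by blast
  qed
  have hiff: "(x,y)\<in>hasse U \<longleftrightarrow> (f x, f y)\<in>hasse T" if x: "x\<in>?V" and y: "y\<in>?V" for x y
  proof -
    have "(\<exists>w. (x,w)\<in>U \<and> (w,y)\<in>U \<and> w \<noteq> x \<and> w \<noteq> y) \<longleftrightarrow>
          (\<exists>w\<in>?V. (x,w)\<in>U \<and> (w,y)\<in>U \<and> w \<noteq> x \<and> w \<noteq> y)" using UV' by blast
    also have "\<dots> \<longleftrightarrow> (\<exists>w\<in>?V. (f x,f w)\<in>T \<and> (f w,f y)\<in>T \<and> f w \<noteq> f x \<and> f w \<noteq> f y)"
      using iff finj x y by (intro bex_cong refl) auto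
    also have "\<dots> \<longleftrightarrow> (\<exists>w'\<in>?V. (f x,w')\<in>T \<and> (w',f y)\<in>T \<and> w' \<noteq> f x \<and> w' \<noteq> f y)"
      using fV fsurj by metis
    also have "\<dots> \<longleftrightarrow> (\<exists>w'. (f x,w')\<in>T \<and> (w',f y)\<in>T \<and> w' \<noteq> f x \<and> w' \<noteq> f y)"
      using TV' by blast
    finally have e: "(\<exists>w. (x,w)\<in>U \<and> (w,y)\<in>U \<and> w \<noteq> x \<and> w \<noteq> y) \<longleftrightarrow>
       (\<exists>w'. (f x,w')\<in>T \<and> (w',f y)\<in>T \<and> w' \<noteq> f x \<and> w' \<noteq> f y)" .
    have a: "((x,y)\<in>U) = ((f x, f y)\<in>T)" using iff x y by blast
    have b: "(x = y) = (f x = f y)" using finj x y by blast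
    show ?thesis unfolding hasse_def mem_Collect_eq prod.case by (simp only: a b e)
  qed
  have hU: "hasse U \<subseteq> ?V \<times> ?V" using hasse_sub UV by blast
  have hT: "hasse T \<subseteq> ?V \<times> ?V" using hasse_sub TV by blast
  let ?F = "\<lambda>(x,y). (f x, f y)"
  have img: "?F ` hasse U = hasse T"
  proof
    show "?F ` hasse U \<subseteq> hasse T" using hiff hU by auto
    show "hasse T \<subseteq> ?F ` hasse U"
    proof
      fix e assume e: "e \<in> hasse T"
      obtain a b where ab: "e = (a,b)" by (cases e)
      have "a \<in> ?V" "b \<in> ?V" using e ab hT by auto
      then obtain x y where "x\<in>?V" "y\<in>?V" "f x = a" "f y = b" using fsurj by metis
      then show "e \<in> ?F ` hasse U" using hiff e ab by (auto intro!: image_eqI[of _ _ "(x,y)"])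
    qed
  qed
  have "inj_on ?F (hasse U)"
  proof (rule inj_onI)
    fix e1 e2 assume e1: "e1 \<in> hasse U" and e2: "e2 \<in> hasse U" and eq: "?F e1 = ?F e2"
    obtain a b where ab: "e1 = (a,b)" by (cases e1)
    obtain c d where cd: "e2 = (c,d)" by (cases e2)
    have V: "a \<in> ?V" "b \<in> ?V" "c \<in> ?V" "d \<in> ?V" using hU e1 e2 ab cd by auto
    have "f a = f c" "f b = f d" using eq ab cd by auto
    then show "e1 = e2" using finj V ab cd by auto
  qed
  then have "card (hasse U) = m" using card_image img cT by metis
  moreover have "no_isolated q U" unfolding no_isolated_def
  proof
    fix x assume x: "x \<in> ?V"
    then obtain y where "(f x, y)\<in>hasse T \<or> (y, f x)\<in>hasse T" using nT fV unfolding no_isolated_def by blast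
    moreover then have "y \<in> ?V" using hT by auto
    ultimately obtain y' where "y' \<in> ?V" "(f x, f y')\<in>hasse T \<or> (f y', f x)\<in>hasse T" using fsurj by metis
    then show "\<exists>y. (x, y) \<in> hasse U \<or> (y, x) \<in> hasse U" using hiff x by blast
  qed
  ultimately show ?thesis using PU unfolding H0_posets_def by blast
qed

lemma surj_step:
  assumes T: "T \<in> H0_posets (Suc (Suc p)) (Suc a)" and lt: "3 * Suc a < 2 * Suc (Suc p)"
  shows "\<exists>R\<in>H0_posets p a. poset_iso (Suc (Suc p)) (addch p R) T"
proof -
  let ?W = "{0..<Suc (Suc p)}"
  have PT: "poset_on (Suc (Suc p)) T" and cT: "card (hasse T) = Suc a"
    and nT: "no_isolated (Suc (Suc p)) T"
    using T unfolding H0_posets_def by auto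
  have TV: "T \<subseteq> ?W \<times> ?W" using poset_sub[OF PT] .
  have hT: "hasse T \<subseteq> ?W \<times> ?W" using hasse_sub TV by blast
  have irr: "\<forall>e\<in>hasse T. fst e \<noteq> snd e" unfolding hasse_def by auto
  have cov: "\<forall>v\<in>?W. \<exists>e\<in>hasse T. fst e = v \<or> snd e = v"
  proof
    fix v assume "v \<in> ?W"
    then obtain y where "(v, y) \<in> hasse T \<or> (y, v) \<in> hasse T" using nT unfolding no_isolated_def by blast
    then show "\<exists>e\<in>hasse T. fst e = v \<or> snd e = v" by force
  qed
  have "3 * card (hasse T) < 2 * card ?W" using cT lt by simp
  then obtain x y where xy: "(x,y)\<in>hasse T"
    and only: "\<forall>e\<in>hasse T. (fst e = x \<or> fst e = y \<or> snd e = x \<or> snd e = y) \<longrightarrow> e = (x,y)"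
    using iso_edge_exists[of ?W "hasse T"] hT irr cov by blast
  have isol: "z = x \<or> z = y" if "(x,z)\<in>T \<or> (z,x)\<in>T \<or> (y,z)\<in>T \<or> (z,y)\<in>T" for z
    using iso_edge_order[OF PT xy only that] .
  have xyT: "(x,y)\<in>T" using xy hasse_sub by blast
  have xny: "x \<noteq> y" using xy unfolding hasse_def by auto
  have xW: "x \<in> ?W" and yW: "y \<in> ?W" using xy hT by auto
  have reflT: "(b,b)\<in>T" if "b \<in> ?W" for b using PT that unfolding poset_on_iff by blast
  have anT: "b = c" if "(b,c)\<in>T" "(c,b)\<in>T" for b c using PT that unfolding poset_on_iff by blast
  have "card (?W - {x,y}) = p" using xW yW xny by (simp add: card_Diff_subset)
  then obtain h where h: "bij_betw h {0..<p} (?W - {x,y})"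
    using finite_same_card_bij[of "{0..<p}" "?W - {x,y}"] by auto
  have hW: "h u \<in> ?W" "h u \<noteq> x" "h u \<noteq> y" if "u < p" for u using h that bij_betwE by fastforce+
  have hinj: "h u = h v \<longleftrightarrow> u = v" if "u < p" "v < p" for u v
    using h that unfolding bij_betw_def inj_on_def by auto
  define g where "g u = (if u < p then h u else if u = p then x else y)" for u
  have gW: "g u \<in> ?W" if "u \<in> ?W" for u using hW xW yW unfolding g_def by auto
  have "inj_on g ?W"
  proof (rule inj_onI)
    fix u v assume u: "u \<in> ?W" and v: "v \<in> ?W" and e: "g u = g v"
    show "u = v"
    proof (cases "u < p")
      case True
      then show ?thesis
      proof (cases "v < p")
        case True then show ?thesis using e hinj \<open>u < p\<close> unfolding g_def by auto
      next
        case False then show ?thesis using e hW \<open>u < p\<close> unfolding g_def by (auto split: if_splits)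
      qed
    next
      case uF: False
      then show ?thesis
      proof (cases "v < p")
        case True then show ?thesis using e hW uF unfolding g_def by (auto split: if_splits)
      next
        case False then show ?thesis using e uF u v xny unfolding g_def by (auto split: if_splits)
      qed
    qed
  qed
  then have gb: "bij_betw g ?W ?W" using gW by (intro inj_endo_bij) auto
  define R where "R = {(u,v). u < p \<and> v < p \<and> (g u, g v)\<in>T}"
  have RV: "R \<subseteq> {0..<p} \<times> {0..<p}" unfolding R_def by auto
  have iff: "\<forall>u\<in>?W. \<forall>v\<in>?W. (u, v) \<in> addch p R \<longleftrightarrow> (g u, g v) \<in> T"
  proof (intro ballI)
    fix u v assume u: "u \<in> ?W" and v: "v \<in> ?W"
    have gp: "g p = x" "g (Suc p) = y" unfolding g_def by auto
    have gl: "g w = h w" if "w < p" for w using that unfolding g_def by auto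
    have cu: "u < p \<or> u = p \<or> u = Suc p" and cv: "v < p \<or> v = p \<or> v = Suc p" using u v by auto
    show "(u, v) \<in> addch p R \<longleftrightarrow> (g u, g v) \<in> T"
    proof (cases "u < p")
      case uT: True
      show ?thesis
      proof (cases "v < p")
        case True then show ?thesis using uT unfolding mem_addch R_def by auto
      next
        case False
        then have "v = p \<or> v = Suc p" using cv by auto
        moreover have "(h u, x) \<notin> T" "(h u, y) \<notin> T" using isol hW[OF uT] by blast+
        ultimately show ?thesis using uT gp gl unfolding mem_addch R_def by auto
      qed
    next
      case uF: False
      then have uu: "u = p \<or> u = Suc p" using cu by auto
      show ?thesis
      proof (cases "v < p")
        case True
        moreover have "(x, h v) \<notin> T" "(y, h v) \<notin> T" using isol hW[OF True] by blast+
        ultimately show ?thesis using uu gp gl unfolding mem_addch R_def by auto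
      next
        case False
        then have vv: "v = p \<or> v = Suc p" using cv by auto
        have "(y,x) \<notin> T" using anT xyT xny by blast
        then show ?thesis using uu vv gp xyT reflT xW yW unfolding mem_addch R_def by auto
      qed
    qed
  qed
  then have iso: "poset_iso (Suc (Suc p)) (addch p R) T" using gb unfolding poset_iso_def by blast
  have "addch p R \<subseteq> ?W \<times> ?W" using RV unfolding addch_def by auto
  then have "addch p R \<in> H0_posets (Suc (Suc p)) (Suc a)" using H0_iso_invariant T iso by blast
  then have "R \<in> H0_posets p a" using H0_addch[OF RV] by blast
  then show ?thesis using iso by blast
qed

lemma H0_step:
  assumes "2 * n \<le> a"
  shows "H0 (2 * a - n) a = H0 (2 * Suc a - n) (Suc a)"
proof -
  define p where "p = 2 * a - n"
  have pp: "2 * Suc a - n = Suc (Suc p)" using assms unfolding p_def by simp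
  have lt: "3 * Suc a < 2 * Suc (Suc p)" using assms unfolding p_def by simp
  let ?A = "H0_posets p a" and ?B = "H0_posets (Suc (Suc p)) (Suc a)"
  let ?E = "{(R, S). R \<in> ?A \<and> S \<in> ?A \<and> poset_iso p R S}"
  let ?F = "{(R, S). R \<in> ?B \<and> S \<in> ?B \<and> poset_iso (Suc (Suc p)) R S}"
  have subA: "R \<subseteq> {0..<p} \<times> {0..<p}" and PA: "poset_on p R" if "R \<in> ?A" for R
    using that poset_sub unfolding H0_posets_def by auto
  have "card (?A // ?E) = card (?B // ?F)"
  proof (rule card_quotient_eq[where h = "addch p"])
    show "equiv ?A ?E" by (rule equiv_H0)
    show "equiv ?B ?F" by (rule equiv_H0)
    show "addch p ` ?A \<subseteq> ?B" using H0_addch subA by blast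
    fix R S assume R: "R \<in> ?A" and S: "S \<in> ?A"
    have RB: "addch p R \<in> ?B" and SB: "addch p S \<in> ?B" using H0_addch subA R S by blast+
    show "(R, S) \<in> ?E \<longleftrightarrow> (addch p R, addch p S) \<in> ?F"
      using R S RB SB iso_addch[OF _ subA[OF R] subA[OF S]]
        iso_cancel[OF subA[OF R] subA[OF S] PA[OF R] PA[OF S]] by auto
  next
    fix T assume T: "T \<in> ?B"
    obtain R where R: "R \<in> ?A" and iso: "poset_iso (Suc (Suc p)) (addch p R) T"
      using surj_step[OF T lt] by blast
    have "addch p R \<in> ?B" using H0_addch subA R by blast
    then show "\<exists>R\<in>?A. (addch p R, T) \<in> ?F" using R iso T by blast
  qed
  then show ?thesis unfolding H0_def pp p_def by simp
qed

theorem lemma6: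
  fixes n :: nat
  shows "\<forall>a b. 2 * n \<le> a \<longrightarrow> 2 * n \<le> b \<longrightarrow> H0 (2 * a - n) a = H0 (2 * b - n) b"
proof -
  have k: "H0 (2 * (2 * n + k) - n) (2 * n + k) = H0 (2 * (2 * n) - n) (2 * n)" for k
  proof (induction k)
    case 0 then show ?case by simp
  next
    case (Suc k)
    have "H0 (2 * (2 * n + k) - n) (2 * n + k) = H0 (2 * Suc (2 * n + k) - n) (Suc (2 * n + k))"
      by (rule H0_step) simp
    then show ?case using Suc by simp
  qed
  show ?thesis
  proof (intro allI impI)
    fix a b assume a: "2 * n \<le> a" and b: "2 * n \<le> b"
    have "H0 (2 * a - n) a = H0 (2 * (2 * n) - n) (2 * n)" using k[of "a - 2 * n"] a by simp
    moreover have "H0 (2 * b - n) b = H0 (2 * (2 * n) - n) (2 * n)" using k[of "b - 2 * n"] b by simp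
    ultimately show "H0 (2 * a - n) a = H0 (2 * b - n) b" by simp
  qed
qed

end
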